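(* Let $q$ be a power of a prime $p \neq 2,3$, let $b,c \in \mathbb F_q$ be such that $g(T) = T^3 + bT^2 + cT + 1$ is irreducible over $\mathbb F_q$, and let $F = y^2 - xz$, $G = x^2 + by^2 + cxy + yz$. Let $H_\pi(r,s) = \mathcal H(M_{rF+G}, M_{sF+G})$. Then: (i) $H_\pi$ is a polynomial of degree at most $2$ in $r$ whose coefficient of $r^2$ is a nonzero constant multiple of $h_0(s) = 3s^4 + 4bs^3 + 6cs^2 + 12 s + 4b - c^2$; (ii) the discriminant of $H_\pi$ with respect to $r$ equals a nonzero constant times $g(s)^2 \, f_\pi(s)$, where $f_\pi(s) = (b^2 - 3c)s^2 + (bc - 9)s + (c^2 - 3b)$; (iii) the coefficients $b^2-3c$ and $bc-9$ are not both zero, and $(bc-9)^2 - 4(b^2-3c)(c^2-3b) \neq 0$ (so $f_\pi$ is not a constant multiple of the square of a linear polynomial).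
   Context: For a quadratic form $K(x,y,z)$ over $\mathbb F_q$, $M_K$ denotes its symmetric $3\times 3$ matrix (so $K(v) = v^T M_K v$). For symmetric $3\times3$ matrices $A,B$, write $\det(tA+B) = \Delta_0 + \Delta_1 t + \Delta_2 t^2 + \Delta_3 t^3$ and set $\mathcal H(A,B) = \Delta_1^2 - 4\Delta_0\Delta_2$. *)

theory Defs
  imports "HOL-Analysis.Analysis" "HOL-Computational_Algebra.Polynomial"
begin

text \<open>Symmetric 3x3 matrix of the ternary quadratic form
  cxx x^2 + cyy y^2 + czz z^2 + cxy xy + cxz xz + cyz yz
  over a commutative ring, where h is one half (the inverse of 2).  Indices 0,1,2 of type 3 correspond to x,y,z.\<close>
definition qmat :: "'b::comm_ring_1 \<Rightarrow> 'b \<Rightarrow> 'b \<Rightarrow> 'b \<Rightarrow> 'b \<Rightarrow> 'b \<Rightarrow> 'b \<Rightarrow> 'b^3^3" where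
  "qmat h cxx cyy czz cxy cxz cyz =
     vector [vector [cxx, h * cxy, h * cxz],
             vector [h * cxy, cyy, h * cyz],
             vector [h * cxz, h * cyz, czz]]"

definition pencil_det :: "'b::comm_ring_1^3^3 \<Rightarrow> 'b^3^3 \<Rightarrow> 'b poly" where
  "pencil_det A B = det (\<chi> i j. [: B $ i $ j, A $ i $ j :])"

definition Delta :: "nat \<Rightarrow> 'b::comm_ring_1^3^3 \<Rightarrow> 'b^3^3 \<Rightarrow> 'b" where
  "Delta k A B = coeff (pencil_det A B) k"

definition HH :: "'b::comm_ring_1^3^3 \<Rightarrow> 'b^3^3 \<Rightarrow> 'b" where
  "HH A B = (Delta 1 A B)^2 - 4 * Delta 0 A B * Delta 2 A B"

text \<open>Bivariate polynomials in r, s over 'a: type 'a poly poly, outer variable r,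
  inner variable s.\<close>
definition cst :: "'a::comm_ring_1 \<Rightarrow> 'a poly poly" where
  "cst a = [:[:a:]:]"

definition rvar :: "'a::comm_ring_1 poly poly" where
  "rvar = [:0, 1:]"

definition svar :: "'a::comm_ring_1 poly poly" where
  "svar = [:[:0, 1:]:]"

text \<open>Matrix of u F + G with F = y^2 - xz, G = x^2 + b y^2 + c xy + yz:
  u F + G = x^2 + (u + b) y^2 + c xy - u xz + yz.\<close>
definition M_uFG :: "'a::field \<Rightarrow> 'a \<Rightarrow> 'a poly poly \<Rightarrow> 'a poly poly^3^3" where
  "M_uFG b c u = qmat (cst (inverse 2)) 1 (u + cst b) 0 (cst c) (- u) 1"

definition H_pi :: "'a::field \<Rightarrow> 'a \<Rightarrow> 'a poly poly" where
  "H_pi b c = HH (M_uFG b c rvar) (M_uFG b c svar)"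

definition disc2 :: "'b::comm_ring_1 poly \<Rightarrow> 'b" where
  "disc2 P = (coeff P 1)^2 - 4 * coeff P 2 * coeff P 0"

end

theory Submission
  imports Defs
begin



definition "tri1 a1 a2 a3 b1 b2 b3 = a1*b2*b3 + b1*a2*b3 + b1*b2*(a3::'b::comm_ring_1)"
definition "tri2 a1 a2 a3 b1 b2 b3 = a1*a2*b3 + a1*b2*a3 + b1*a2*(a3::'b::comm_ring_1)"
lemma pencil_eq:
  fixes A B :: "'b::comm_ring_1^3^3"
  shows "pencil_det A B = [: det B,
    tri1 (A$1$1) (A$2$2) (A$3$3) (B$1$1) (B$2$2) (B$3$3) +
    tri1 (A$1$2) (A$2$3) (A$3$1) (B$1$2) (B$2$3) (B$3$1) +
    tri1 (A$1$3) (A$2$1) (A$3$2) (B$1$3) (B$2$1) (B$3$2) -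
    tri1 (A$1$1) (A$2$3) (A$3$2) (B$1$1) (B$2$3) (B$3$2) -
    tri1 (A$1$2) (A$2$1) (A$3$3) (B$1$2) (B$2$1) (B$3$3) -
    tri1 (A$1$3) (A$2$2) (A$3$1) (B$1$3) (B$2$2) (B$3$1),
    tri2 (A$1$1) (A$2$2) (A$3$3) (B$1$1) (B$2$2) (B$3$3) +
    tri2 (A$1$2) (A$2$3) (A$3$1) (B$1$2) (B$2$3) (B$3$1) +
    tri2 (A$1$3) (A$2$1) (A$3$2) (B$1$3) (B$2$1) (B$3$2) -
    tri2 (A$1$1) (A$2$3) (A$3$2) (B$1$1) (B$2$3) (B$3$2) -
    tri2 (A$1$2) (A$2$1) (A$3$3) (B$1$2) (B$2$1) (B$3$3) -
    tri2 (A$1$3) (A$2$2) (A$3$1) (B$1$3) (B$2$2) (B$3$1),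
    det A :]"
  unfolding pencil_det_def det_3[of A] det_3[of B] det_3[of "\<chi> i j. [:B$i$j, A$i$j:]"] tri1_def tri2_def
  by (simp add: algebra_simps)

lemma qmat_entries:
 "qmat h a1 a2 a3 a4 a5 a6 $1$1 = a1" "qmat h a1 a2 a3 a4 a5 a6 $1$2 = h*a4" "qmat h a1 a2 a3 a4 a5 a6 $1$3 = h*a5"
 "qmat h a1 a2 a3 a4 a5 a6 $2$1 = h*a4" "qmat h a1 a2 a3 a4 a5 a6 $2$2 = a2" "qmat h a1 a2 a3 a4 a5 a6 $2$3 = h*a6"
 "qmat h a1 a2 a3 a4 a5 a6 $3$1 = h*a5" "qmat h a1 a2 a3 a4 a5 a6 $3$2 = h*a6" "qmat h a1 a2 a3 a4 a5 a6 $3$3 = a3"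
  by (simp_all add: qmat_def)

lemma HH_generic:
  fixes R S cb cc hh :: "'b::idom"
  assumes h2: "2 * hh = 1"
  shows "HH (qmat hh 1 (R+cb) 0 cc (-R) 1) (qmat hh 1 (S+cb) 0 cc (-S) 1) =
     hh^4 * ( ((3 + 2*cc*S + cb*S^2 + R*(cc + 2*cb*S + 3*S^2)))^2
       - 4 * (1 + cc*S + cb*S^2 + S^3) * (3 + cc*S + R*(2*cc + 2*cb*S) + R^2*(cb + 3*S)))"
proof -
  let ?A = "qmat hh 1 (R+cb) 0 cc (-R) 1" and ?B = "qmat hh 1 (S+cb) 0 cc (-S) 1"
  have d0: "Delta 0 ?A ?B = -(hh^2)*(1 + cc*S + cb*S^2 + S^3)"
    unfolding Delta_def pencil_eq det_3[of ?B] qmat_entries apply simp using h2 by Groebner_Basis.algebra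
  have d1: "Delta 1 ?A ?B = -(hh^2)*(3 + 2*cc*S + cb*S^2 + R*(cc + 2*cb*S + 3*S^2))"
    unfolding Delta_def pencil_eq qmat_entries tri1_def apply simp using h2 by Groebner_Basis.algebra
  have d2: "Delta 2 ?A ?B = -(hh^2)*(3 + cc*S + R*(2*cc + 2*cb*S) + R^2*(cb + 3*S))"
    unfolding Delta_def pencil_eq qmat_entries tri2_def apply (simp add: numeral_2_eq_2) using h2 by Groebner_Basis.algebra
  show ?thesis unfolding HH_def d0 d1 d2 by Groebner_Basis.algebra
qed

lemma C_mult: "[:x*y:] = [:x:]*([:y:])" for x y :: "'b::comm_ring_1" by simp
lemma C_pow: "[:x^n:] = ([:x::'b::comm_ring_1:])^n"
  apply (induct n) apply (simp add: one_pCons) by (metis power_Suc C_mult)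
lemma C_simps: "[:x+y:] = [:x:]+[:y:]" "[:x-y:] = [:x:]-[:y:]" "[:-x:] = -[:x:]"
  "[:x*y:] = [:x:]*([:y:])" "[:numeral n:] = (numeral n :: 'b poly)" "[:1::'b:] = 1" "[:0::'b:] = 0"
  for x y :: "'b::comm_ring_1"
  by (simp_all add: numeral_poly one_pCons)

lemma list3: "[:a0,a1,a2:] = [:a0:] + rvar*[:a1:] + rvar^2*[:(a2::'b::comm_ring_1 poly):]"
  by (simp add: power2_eq_square rvar_def)
lemma list5: "[:a0,a1,a2,a3,a4:] = [:a0:] + [:0,1:]*[:a1:] + [:0,1:]^2*[:a2:] + [:0,1:]^3*[:a3:] + [:0,1:]^4*[:(a4::'b::comm_ring_1):]"
  by (simp add: power2_eq_square power3_eq_cube power4_eq_xxxx)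

definition "xP = ([:0,1:] :: 'a::comm_ring_1 poly)"
definition "gP b c = 1+[:c:]*xP+[:b:]*xP^2+xP^3"
definition "P1 b c = 3+2*[:c:]*xP+[:b:]*xP^2"
definition "Q1 b c = [:c:]+2*[:b:]*xP+3*xP^2"
definition "P2 b c = 3+[:c:]*xP"
definition "Q2 b c = 2*[:c:]+2*[:b:]*xP"
definition "W b (c::'a::comm_ring_1) = [:b:]+3*xP"

lemma Hpi_form:
  fixes b c :: "'a::field"
  assumes two: "(2::'a) \<noteq> 0"
  defines "h \<equiv> inverse (2::'a)"
  shows "H_pi b c = [: [:h^4:]*((P1 b c)^2-4*gP b c*P2 b c), [:h^4:]*(2*P1 b c*Q1 b c-4*gP b c*Q2 b c),
      [:h^4:]*((Q1 b c)^2-4*gP b c*W b c) :]"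
proof -
  have hh: "2 * cst h = (1::'a poly poly)"
  proof -
    have "2 * cst h = (cst (2*h) :: 'a poly poly)" by (simp only: cst_def C_simps)
    also have "2*h = 1" using two h_def by simp
    finally show ?thesis by (simp add: cst_def one_pCons)
  qed
  have H: "H_pi b c = cst h ^ 4 * ( ((3 + 2 * cst c * svar + cst b * svar^2 + rvar*(cst c + 2 * cst b * svar + 3 * svar^2)))^2
       - 4 * (1 + cst c * svar + cst b * svar^2 + svar^3) * (3 + cst c * svar + rvar*(2 * cst c + 2 * cst b * svar) + rvar^2*(cst b + 3 * svar)))"
    unfolding H_pi_def M_uFG_def h_def[symmetric] by (rule HH_generic[OF hh])
  show ?thesis unfolding H
    apply (subst list3)
    apply (simp only: cst_def svar_def C_simps C_pow P1_def Q1_def gP_def P2_def Q2_def W_def xP_def)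
    by Groebner_Basis.algebra
qed



lemma my_CHAR_dvd_CARD: "CHAR('a::{comm_ring_1,finite}) dvd CARD('a)"
proof -
  let ?n = "CHAR('a)"
  have npos: "?n > 0" by (rule finite_imp_CHAR_pos) simp
  define cls where "cls x = range (\<lambda>i::nat. x + of_nat i)" for x :: 'a
  have per: "(of_nat i :: 'a) = of_nat (i mod ?n)" for i
  proof -
    have "(of_nat i :: 'a) = of_nat (i div ?n * ?n) + of_nat (i mod ?n)"
      by (metis div_mult_mod_eq of_nat_add)
    thus ?thesis by simp
  qed
  have inj: "i = j" if "i < ?n" "j < ?n" "(of_nat i :: 'a) = of_nat j" for i j
  proof (rule ccontr)
    assume "i \<noteq> j"
    then consider "i < j" | "j < i" by linarith
    thus False
    proof cases
      case 1
      hence "?n dvd (j - i)" using that(3) of_nat_eq_iff_char_dvd[OF 1, where ?'a='a] by simp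
      moreover have "0 < j - i" "j - i < ?n" using 1 that by auto
      ultimately show False using nat_dvd_not_less by blast
    next
      case 2
      hence "?n dvd (i - j)" using that(3)[symmetric] of_nat_eq_iff_char_dvd[OF 2, where ?'a='a] by simp
      moreover have "0 < i - j" "i - j < ?n" using 2 that by auto
      ultimately show False using nat_dvd_not_less by blast
    qed
  qed
  have cls_img: "cls x = (\<lambda>i. x + of_nat i) ` {..<?n}" for x
  proof
    show "cls x \<subseteq> (\<lambda>i. x + of_nat i) ` {..<?n}"
    proof
      fix y assume "y \<in> cls x"
      then obtain i where "y = x + of_nat i" unfolding cls_def by auto
      hence "y = x + of_nat (i mod ?n)" using per by metis
      moreover have "i mod ?n < ?n" using npos by simp
      ultimately show "y \<in> (\<lambda>i. x + of_nat i) ` {..<?n}" by blast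
    qed
  qed (auto simp: cls_def)
  have card_cls: "card (cls x) = ?n" for x
    unfolding cls_img by (subst card_image) (auto intro!: inj_onI inj)
  have neg: "- (of_nat j :: 'a) = of_nat ((?n - 1) * j)" for j
  proof -
    have "(of_nat ((?n - 1) * j) :: 'a) + of_nat j = of_nat (?n * j)"
      using npos by (simp flip: of_nat_add)
    also have "\<dots> = 0" by simp
    finally show ?thesis by (metis add.commute add_eq_0_iff2)
  qed
  have sub: "cls y \<subseteq> cls x" if yin: "y \<in> cls x" for x y
  proof -
    obtain i where y: "y = x + of_nat i" using yin by (auto simp: cls_def)
    show ?thesis unfolding cls_def y by (auto simp: add.assoc simp flip: of_nat_add)
  qed
  have symm: "x \<in> cls y" if yin: "y \<in> cls x" for x y
  proof -
    obtain i where y: "y = x + of_nat i" using yin by (auto simp: cls_def)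
    have "x = y + of_nat ((?n - 1) * i)" unfolding y neg[symmetric] by simp
    thus ?thesis unfolding cls_def by blast
  qed
  have self: "x \<in> cls x" for x unfolding cls_def by (auto intro: range_eqI[of _ _ 0])
  have "?n dvd card (\<Union>(range cls))"
  proof (rule dvd_partition)
    show "finite (\<Union>(range cls))" by simp
    show "\<forall>c\<in>range cls. ?n dvd card c" using card_cls by auto
    show "\<forall>c1\<in>range cls. \<forall>c2\<in>range cls. c1 \<noteq> c2 \<longrightarrow> c1 \<inter> c2 = {}"
    proof (intro ballI impI)
      fix c1 c2 assume "c1 \<in> range cls" "c2 \<in> range cls" "c1 \<noteq> c2"
      then obtain x y where c: "c1 = cls x" "c2 = cls y" by auto
      show "c1 \<inter> c2 = {}"
      proof (rule ccontr)
        assume "c1 \<inter> c2 \<noteq> {}"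
        then obtain z where "z \<in> cls x" "z \<in> cls y" using c by auto
        hence "cls x = cls z" "cls y = cls z" using sub symm by (auto intro!: subset_antisym)
        thus False using c \<open>c1 \<noteq> c2\<close> by simp
      qed
    qed
  qed
  moreover have "\<Union>(range cls) = UNIV" using self by auto
  ultimately show ?thesis by simp
qed

lemma char_facts:
  fixes p k :: nat
  assumes "prime p" "p \<noteq> 2" "p \<noteq> 3" "CARD('a::{field,finite}) = p ^ k"
  shows "(2::'a) \<noteq> 0" "(3::'a) \<noteq> 0"
proof -
  have pos: "CHAR('a) > 0" by (rule finite_imp_CHAR_pos) simp
  have pc: "prime CHAR('a)" by (rule prime_CHAR_semidom[OF pos])
  have "CHAR('a) dvd p ^ k" using my_CHAR_dvd_CARD[where 'a='a] assms(4) by simp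
  hence "CHAR('a) dvd p" using pc prime_dvd_power by blast
  hence cp: "CHAR('a) = p" using pc assms(1) primes_dvd_imp_eq by blast
  show "(2::'a) \<noteq> 0"
  proof
    assume "(2::'a) = 0"
    hence "(of_nat 2::'a) = 0" by simp
    hence "p dvd 2" using cp of_nat_eq_0_iff_char_dvd by metis
    thus False using assms(1,2) two_is_prime_nat primes_dvd_imp_eq by blast
  qed
  show "(3::'a) \<noteq> 0"
  proof
    assume "(3::'a) = 0"
    hence "(of_nat 3::'a) = 0" by simp
    hence "p dvd 3" using cp of_nat_eq_0_iff_char_dvd by metis
    moreover have "prime (3::nat)"
    proof -
      have "{2..<3::nat} = {2}" by auto
      thus ?thesis by (simp add: prime_nat_iff')
    qed
    ultimately show False using assms(1,3) primes_dvd_imp_eq by blast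
  qed
qed

lemma g_poly: "poly [:1, c, b, 1:] (T::'a::comm_ring_1) = 1 + T*(c + T*(b + T))" by simp
lemma g_div: fixes X Y b c :: "'a::field" assumes "Y \<noteq> 0"
  shows "Y^3 * poly [:1, c, b, 1:] (X / Y) = Y^3 + c*X*Y^2 + b*X^2*Y + X^3"
proof -
  have "Y^3 * poly [:1, c, b, 1:] (X / Y) = Y^3 + c*(X/Y)*Y^3 + b*(X/Y)^2*Y^3 + (X/Y)^3*Y^3"
    unfolding g_poly by (simp add: algebra_simps power2_eq_square power3_eq_cube)
  also have "\<dots> = Y^3 + c*X*Y^2 + b*X^2*Y + X^3" using assms
    by (simp add: power2_eq_square power3_eq_cube power_divide)
  finally show ?thesis .
qed
lemma root_not_irred:
  fixes g :: "'a::field poly"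
  assumes "irreducible g" "degree g = 3" "poly g x = 0"
  shows False
proof -
  obtain q where q: "g = [:-x,1:] * q" using assms(3) poly_eq_0_iff_dvd by (metis dvdE)
  have "g \<noteq> 0" using assms(2) by auto
  hence q0: "q \<noteq> 0" using q by auto
  have "degree g = degree [:-x,1:] + degree q" unfolding q by (rule degree_mult_eq) (use q0 in auto)
  hence dq: "degree q = 2" using assms(2) by simp
  from irreducibleD[OF assms(1) q] show False
    using q0 dq by (auto simp: is_unit_iff_degree)
qed

lemma id1: "b^3 - 27 = b*(b^2 - 3 * c) + 3*(b * c - 9)" for b c :: "'b::idom" by Groebner_Basis.algebra
lemma id2: "9 * ((b * c - 9)^2 - 4 * (b^2 - 3 * c) * (c^2 - 3 * b)) =
   (2*b^3 - 9*b*c + 27)^2 + 4*(3*c - b^2)^3" for b c :: "'b::comm_ring_1" by (simp add: algebra_simps power2_eq_square power3_eq_cube)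

lemma id3: "3^3 + c*(-b)*3^2 + b*(-b)^2*3 + (-b)^3 = 27 - 9*(b*c) + 2 * b^3" for b c :: "'b::comm_ring_1"
  by (simp add: algebra_simps power2_eq_square power3_eq_cube)
lemma id4: "3^3 + c*(-b)*3^2 + b*(-b)^2*3 + (-b)^3 = 2*b^3 - 9*b*c + 27" for b c :: "'b::comm_ring_1"
  by (simp add: algebra_simps power2_eq_square power3_eq_cube)
lemma id5: "(6*P)^3 + c*(-(Q + 2*b*P))*(6*P)^2 + b*(-(Q + 2*b*P))^2*(6*P) + (-(Q + 2*b*P))^3 = - Q * (Q^2 + 4*P^3)"
  if "P = 3*c - b^2" "Q = 2*b^3 - 9*b*c + 27" for b c P Q :: "'b::comm_ring_1"
  unfolding that by (simp add: algebra_simps power2_eq_square power3_eq_cube)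

lemma part3a:
  fixes b c :: "'a::field"
  assumes irr: "irreducible [:1, c, b, 1:]" and three: "(3::'a) \<noteq> 0"
  shows "b^2 - 3 * c \<noteq> 0 \<or> b * c - 9 \<noteq> 0"
proof (rule ccontr)
  assume "\<not> ?thesis"
  hence e1: "b^2 - 3 * c = 0" and e2: "b * c - 9 = 0" by auto
  have "b^3 - 27 = b*(b^2 - 3 * c) + 3*(b * c - 9)" by (rule id1)
  hence b3: "b^3 = 27" using e1 e2 by simp
  have "3^3 * poly [:1, c, b, 1:] (-b / 3) = 3^3 + c*(-b)*3^2 + b*(-b)^2*3 + (-b)^3"
    by (rule g_div) (use three in simp)
  also have "\<dots> = 27 - 9*(b*c) + 2 * b^3" by (rule id3)
  also have "\<dots> = 0" using e2 b3 by simp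
  finally have "3^3 * poly [:1, c, b, 1:] (-b/3) = 0" .
  hence r0: "poly [:1, c, b, 1:] (-b/3) = 0" using three by (metis mult_eq_0_iff power_not_zero)
  show False by (rule root_not_irred[OF irr _ r0]) simp
qed

lemma part3b:
  fixes b c :: "'a::field"
  assumes irr: "irreducible [:1, c, b, 1:]" and three: "(3::'a) \<noteq> 0" and two: "(2::'a) \<noteq> 0"
  shows "(b * c - 9)^2 - 4 * (b^2 - 3 * c) * (c^2 - 3 * b) \<noteq> 0"
proof
  assume D: "(b * c - 9)^2 - 4 * (b^2 - 3 * c) * (c^2 - 3 * b) = 0"
  define P where "P = 3*c - b^2"
  define Q where "Q = 2*b^3 - 9*b*c + 27"
  have iD: "9 * ((b * c - 9)^2 - 4 * (b^2 - 3 * c) * (c^2 - 3 * b)) = Q^2 + 4*P^3"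
    unfolding P_def Q_def by (rule id2)
  have n6: "(6::'a) \<noteq> 0" using two three
    using two three mult_eq_0_iff[of "2::'a" 3] by simp
  show False
  proof (cases "P = 0")
    case True
    have "Q^2 = 0" using iD D True by simp
    hence Q0: "Q = 0" by simp
    have "3^3 * poly [:1, c, b, 1:] (-b / 3) = 3^3 + c*(-b)*3^2 + b*(-b)^2*3 + (-b)^3"
      by (rule g_div) (use three in simp)
    also have "\<dots> = Q" unfolding Q_def by (rule id4)
    finally have "3^3 * poly [:1, c, b, 1:] (-b/3) = Q" .
    hence "3^3 * poly [:1, c, b, 1:] (-b/3) = 0" using Q0 by (simp only:)
    hence r0: "poly [:1, c, b, 1:] (-b/3) = 0" using three by (metis mult_eq_0_iff power_not_zero)
    show False by (rule root_not_irred[OF irr _ r0]) simp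
  next
    case False
    have Y0: "6 * P \<noteq> 0" using False n6 by simp
    have "(6*P)^3 * poly [:1, c, b, 1:] (-(Q + 2*b*P) / (6*P)) =
       (6*P)^3 + c*(-(Q + 2*b*P))*(6*P)^2 + b*(-(Q + 2*b*P))^2*(6*P) + (-(Q + 2*b*P))^3"
      by (rule g_div[OF Y0])
    also have "\<dots> = - Q * (Q^2 + 4*P^3)" by (rule id5[OF P_def Q_def])
    also have "\<dots> = 0" using iD D by simp
    finally have "(6*P)^3 * poly [:1, c, b, 1:] (-(Q + 2*b*P) / (6*P)) = 0" .
    hence r0: "poly [:1, c, b, 1:] (-(Q + 2*b*P) / (6*P)) = 0" using Y0 by (metis mult_eq_0_iff power_not_zero)
    show False by (rule root_not_irred[OF irr _ r0]) simp
  qed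
qed



lemma list3i: "[:a0,a1,a2:] = [:a0:] + [:0,1:]*[:a1:] + [:0,1:]^2*[:(a2::'b::comm_ring_1):]"
  by (simp add: power2_eq_square)
lemma list4i: "[:a0,a1,a2,a3:] = [:a0:] + [:0,1:]*[:a1:] + [:0,1:]^2*[:a2:] + [:0,1:]^3*[:(a3::'b::comm_ring_1):]"
  by (simp add: power2_eq_square power3_eq_cube)
lemma smult_C: "smult x p = [:x:] * p" by simp
lemma deg3: "degree [:a0,a1,a2:] \<le> 2"
proof -
  have "degree [:a1,a2:] \<le> 1" using degree_pCons_le[of a1 "[:a2:]"] by simp
  thus ?thesis using degree_pCons_le[of a0 "[:a1,a2:]"] by simp
qed
lemma coeff3: "coeff [:a0,a1,a2:] 0 = a0" "coeff [:a0,a1,a2:] 1 = a1" "coeff [:a0,a1,a2:] 2 = a2"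
  by (simp_all add: numeral_2_eq_2)

theorem mainTheorem6:
  fixes b c :: "'a::{field, finite}" and p k :: nat
  assumes "prime p" and "p \<noteq> 2" and "p \<noteq> 3" and "CARD('a) = p ^ k"
    and "irreducible [:1, c, b, 1:]"
  shows "degree (H_pi b c) \<le> 2
      \<and> (\<exists>\<kappa>::'a. \<kappa> \<noteq> 0 \<and>
           coeff (H_pi b c) 2 = smult \<kappa> [:4 * b - c^2, 12, 6 * c, 4 * b, 3:])
      \<and> (\<exists>\<kappa>::'a. \<kappa> \<noteq> 0 \<and>
           disc2 (H_pi b c) = smult \<kappa> ([:1, c, b, 1:]^2 * [:c^2 - 3 * b, b * c - 9, b^2 - 3 * c:]))
      \<and> (b^2 - 3 * c \<noteq> 0 \<or> b * c - 9 \<noteq> 0)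
      \<and> (b * c - 9)^2 - 4 * (b^2 - 3 * c) * (c^2 - 3 * b) \<noteq> 0"
proof -
  have two: "(2::'a) \<noteq> 0" and three: "(3::'a) \<noteq> 0" using char_facts[OF assms(1-4)] by auto
  define h where "h = inverse (2::'a)"
  have h0: "h \<noteq> 0" unfolding h_def using two by simp
  have HF: "H_pi b c = [: [:h^4:]*((P1 b c)^2-4*gP b c*P2 b c), [:h^4:]*(2*P1 b c*Q1 b c-4*gP b c*Q2 b c),
      [:h^4:]*((Q1 b c)^2-4*gP b c*W b c) :]" unfolding h_def by (rule Hpi_form[OF two])
  have c1: "degree (H_pi b c) \<le> 2" unfolding HF by (rule deg3)
  have c2: "coeff (H_pi b c) 2 = smult (-(h^4)) [:4 * b - c^2, 12, 6 * c, 4 * b, 3:]"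
    unfolding HF coeff3
    apply (subst list5)
    apply (simp only: smult_C Q1_def gP_def W_def xP_def C_simps C_pow)
    by Groebner_Basis.algebra
  have c3: "disc2 (H_pi b c) = smult (16 * h^8) ([:1, c, b, 1:]^2 * [:c^2 - 3 * b, b * c - 9, b^2 - 3 * c:])"
    unfolding HF disc2_def coeff3
    apply (subst list4i)
    apply (subst list3i)
    apply (simp only: smult_C P1_def P2_def Q2_def Q1_def gP_def W_def xP_def C_simps C_pow)
    by Groebner_Basis.algebra
  have "(16::'a) = 2^4" by simp
  hence "(16::'a) \<noteq> 0" using two by (metis power_not_zero)
  hence k2: "16 * h^8 \<noteq> 0" using h0 by simp
  have e2: "\<exists>\<kappa>::'a. \<kappa> \<noteq> 0 \<and>
           coeff (H_pi b c) 2 = smult \<kappa> [:4 * b - c^2, 12, 6 * c, 4 * b, 3:]"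
    using c2 h0 by (metis neg_equal_0_iff_equal power_not_zero)
  have e3: "\<exists>\<kappa>::'a. \<kappa> \<noteq> 0 \<and>
           disc2 (H_pi b c) = smult \<kappa> ([:1, c, b, 1:]^2 * [:c^2 - 3 * b, b * c - 9, b^2 - 3 * c:])"
    using c3 k2 by blast
  show ?thesis using c1 e2 e3 part3a[OF assms(5) three] part3b[OF assms(5) three two]
    by blast
qed


end
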